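(* Let $G$ be a connected, finite, pointed, edge-ordered graph with distinguished vertex $v_0$, and let $T=(F\circ I'\circ\Theta)(G)$. Then the neighborhood ordering $\triangleleft$ of the distinguished point $v_0$ in $T$ is the lexicographic depth-first traversal of $G$: for vertices $u,v$ of $G$ with $v_0\to u$ and $v_0\to v$ in $T$, $v_0\to u\triangleleft v_0\to v$ in $T$ iff $u$ precedes $v$ in the lexicographic depth-first traversal of $G$ (and these targets are the vertices other than $v_0$, which comes first in the traversal).
   Context: A (directed) graph is $(V,\to)$ with $\to\subseteq V\times V$; $N(u)$ is the set of outgoing edges of $u$. A pointed graph has a distinguished vertex $v_0$; connected means every vertex is reachable by a path from $v_0$. A path is a finite sequence $v_1\to\cdots\to v_n$ of vertices joined by edges; proper if no vertex repeats; co-initial paths share their source; $\pi\sqsubset\sigma$ means $\pi$ is a proper prefix of $\sigma$. A finite edge-ordered graph is a finite graph with a strict linear order $\triangleleft$ on each neighborhood. Lexicographic path order: if $\pi\sqsubset\sigma$ then $\pi\prec\sigma$ (symmetrically); otherwise, with $\zeta$ the longest common prefix, $u$ its target and $v_1,v_2$ the next vertices, $\pi\prec\sigma$ iff $u\to v_1\triangleleft u\to v_2$. $\min(u\rightsquigarrow v)$ is the $\prec$-least proper path from $u$ to $v$. Lexicographic depth-first search on $G$: initialize a list $L=()$ and a stack $S=(v_0)$; while $S$ is nonempty, pop the top element $v$; if $v\in L$, continue; otherwise append $v$ to $L$ and push the vertices of $\partial v$ (neighbors of $v$ not in $L$) onto $S$ in reverse $\triangleleft$-order (so the $\triangleleft$-least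 ends on top). The lexicographic depth-first traversal is the order in which vertices are appended to $L$. Lex-homomorphisms, lex-graphs: a lex-homomorphism $h$ is a vertex map preserving edges, mapping exactly the distinguished vertex to the distinguished vertex, monotone on neighborhoods, and with $h(\min(u\rightsquigarrow v))=\min(h(u)\rightsquigarrow h(v))$; a lex-graph is a finite, pointed, connected, edge-ordered graph with $u\to v_1\triangleleft u\to v_2$ iff $\min(u\rightsquigarrow v_1)\prec\min(u\rightsquigarrow v_2)$. An arborescence is a pointed graph with a unique path $v_0\rightsquigarrow u$ for every $u$. Functors: $\Theta$ sends $G$ to the edge-ordered arborescence on the vertices of $G$ with the same distinguished vertex, containing $u\to v$ iff it is an edge of $\min(v_0\rightsquigarrow v)$ in $G$, with edge order inherited from $G$; $I'$ regards an edge-ordered arborescence as a lex-graph; $F$ sends a lex-graph $H$ to the graph on the same vertices and distinguished point with edge relation the transitive closure of that of $H$ and $u\to v_1\triangleleft u\to v_2$ iff $\min(u\rightsquigarrow v_1)\prec\min(u\rightsquigarrow v_2)$ in $H$. *)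

theory Defs
  imports Main
begin

text \<open>An edge order is ord :: 'a \<Rightarrow> 'a \<Rightarrow> 'a \<Rightarrow> bool, where ord u v1 v2 means
  (u \<rightarrow> v1) \<triangleleft> (u \<rightarrow> v2).\<close>

definition is_path :: "('a \<Rightarrow> 'a \<Rightarrow> bool) \<Rightarrow> 'a list \<Rightarrow> bool" where
  "is_path E p \<longleftrightarrow> p \<noteq> [] \<and> (\<forall>i. Suc i < length p \<longrightarrow> E (p ! i) (p ! Suc i))"

definition proper_path :: "('a \<Rightarrow> 'a \<Rightarrow> bool) \<Rightarrow> 'a \<Rightarrow> 'a \<Rightarrow> 'a list \<Rightarrow> bool" where
  "proper_path E u v p \<longleftrightarrow> is_path E p \<and> distinct p \<and> hd p = u \<and> last p = v"

definition lex_less :: "('a \<Rightarrow> 'a \<Rightarrow> 'a \<Rightarrow> bool) \<Rightarrow> 'a list \<Rightarrow> 'a list \<Rightarrow> bool" where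
  "lex_less ord p q \<longleftrightarrow>
     (\<exists>r. r \<noteq> [] \<and> q = p @ r) \<or>
     (\<exists>z v1 v2 r1 r2. p = z @ v1 # r1 \<and> q = z @ v2 # r2 \<and> z \<noteq> [] \<and> v1 \<noteq> v2
        \<and> ord (last z) v1 v2)"

definition min_path :: "('a \<Rightarrow> 'a \<Rightarrow> bool) \<Rightarrow> ('a \<Rightarrow> 'a \<Rightarrow> 'a \<Rightarrow> bool) \<Rightarrow> 'a \<Rightarrow> 'a \<Rightarrow> 'a list" where
  "min_path E ord u v = (SOME p. proper_path E u v p \<and>
      (\<forall>q. proper_path E u v q \<longrightarrow> q \<noteq> p \<longrightarrow> lex_less ord p q))"

definition edge_ordered :: "'a set \<Rightarrow> ('a \<Rightarrow> 'a \<Rightarrow> bool) \<Rightarrow> ('a \<Rightarrow> 'a \<Rightarrow> 'a \<Rightarrow> bool) \<Rightarrow> bool" where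
  "edge_ordered V E ord \<longleftrightarrow>
     finite V \<and> (\<forall>u v. E u v \<longrightarrow> u \<in> V \<and> v \<in> V) \<and>
     (\<forall>u a b. ord u a b \<longrightarrow> E u a \<and> E u b) \<and>
     (\<forall>u a. \<not> ord u a a) \<and>
     (\<forall>u a b c. ord u a b \<longrightarrow> ord u b c \<longrightarrow> ord u a c) \<and>
     (\<forall>u a b. E u a \<longrightarrow> E u b \<longrightarrow> a \<noteq> b \<longrightarrow> ord u a b \<or> ord u b a)"

definition connected_from :: "'a set \<Rightarrow> ('a \<Rightarrow> 'a \<Rightarrow> bool) \<Rightarrow> 'a \<Rightarrow> bool" where
  "connected_from V E v0 \<longleftrightarrow> v0 \<in> V \<and> (\<forall>v\<in>V. E\<^sup>*\<^sup>* v0 v)"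

text \<open>Lexicographic depth-first search: dfs_run E ord L S L' means that running the
  loop from list L and stack S (head = top) ends with list L'.\<close>
definition sorted_nbrs :: "('a \<Rightarrow> 'a \<Rightarrow> bool) \<Rightarrow> ('a \<Rightarrow> 'a \<Rightarrow> 'a \<Rightarrow> bool) \<Rightarrow> 'a \<Rightarrow> 'a list \<Rightarrow> 'a list" where
  "sorted_nbrs E ord v L = (SOME xs. set xs = {w. E v w \<and> w \<notin> set L} \<and> distinct xs
      \<and> sorted_wrt (ord v) xs)"

inductive dfs_run :: "('a \<Rightarrow> 'a \<Rightarrow> bool) \<Rightarrow> ('a \<Rightarrow> 'a \<Rightarrow> 'a \<Rightarrow> bool) \<Rightarrow> 'a list \<Rightarrow> 'a list \<Rightarrow> 'a list \<Rightarrow> bool"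
  for E ord where
  stop: "dfs_run E ord L [] L"
| skip: "v \<in> set L \<Longrightarrow> dfs_run E ord L S L' \<Longrightarrow> dfs_run E ord L (v # S) L'"
| visit: "v \<notin> set L \<Longrightarrow> dfs_run E ord (L @ [v]) (sorted_nbrs E ord v (L @ [v]) @ S) L'
           \<Longrightarrow> dfs_run E ord L (v # S) L'"

definition dfs_traversal :: "('a \<Rightarrow> 'a \<Rightarrow> bool) \<Rightarrow> ('a \<Rightarrow> 'a \<Rightarrow> 'a \<Rightarrow> bool) \<Rightarrow> 'a \<Rightarrow> 'a list" where
  "dfs_traversal E ord v0 = (THE L. dfs_run E ord [] [v0] L)"

definition precedes :: "'a list \<Rightarrow> 'a \<Rightarrow> 'a \<Rightarrow> bool" where
  "precedes L u v \<longleftrightarrow> (\<exists>i j. i < j \<and> j < length L \<and> L ! i = u \<and> L ! j = v)"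

text \<open>Theta: the arborescence of lexicographically least paths from v0.\<close>
definition Theta_E :: "'a set \<Rightarrow> ('a \<Rightarrow> 'a \<Rightarrow> bool) \<Rightarrow> ('a \<Rightarrow> 'a \<Rightarrow> 'a \<Rightarrow> bool) \<Rightarrow> 'a \<Rightarrow> 'a \<Rightarrow> 'a \<Rightarrow> bool" where
  "Theta_E V E ord v0 u v \<longleftrightarrow> u \<in> V \<and> v \<in> V \<and>
     (let p = min_path E ord v0 v in \<exists>i. Suc i < length p \<and> p ! i = u \<and> p ! Suc i = v)"

definition Theta_ord :: "'a set \<Rightarrow> ('a \<Rightarrow> 'a \<Rightarrow> bool) \<Rightarrow> ('a \<Rightarrow> 'a \<Rightarrow> 'a \<Rightarrow> bool) \<Rightarrow> 'a \<Rightarrow> 'a \<Rightarrow> 'a \<Rightarrow> 'a \<Rightarrow> bool" where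
  "Theta_ord V E ord v0 u v1 v2 \<longleftrightarrow> Theta_E V E ord v0 u v1 \<and> Theta_E V E ord v0 u v2 \<and> ord u v1 v2"

text \<open>F: transitive closure, with edges ordered by least paths in H. (I' is the identity.)\<close>
definition F_E :: "('a \<Rightarrow> 'a \<Rightarrow> bool) \<Rightarrow> 'a \<Rightarrow> 'a \<Rightarrow> bool" where
  "F_E H = H\<^sup>+\<^sup>+"

definition F_ord :: "('a \<Rightarrow> 'a \<Rightarrow> bool) \<Rightarrow> ('a \<Rightarrow> 'a \<Rightarrow> 'a \<Rightarrow> bool) \<Rightarrow> 'a \<Rightarrow> 'a \<Rightarrow> 'a \<Rightarrow> bool" where
  "F_ord H Hord u v1 v2 \<longleftrightarrow> H\<^sup>+\<^sup>+ u v1 \<and> H\<^sup>+\<^sup>+ u v2 \<and>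
     lex_less Hord (min_path H Hord u v1) (min_path H Hord u v2)"

end

theory Submission
  imports Defs
begin

lemma is_path_Nil[simp]: "\<not> is_path E []" by (simp add: is_path_def)
lemma is_path_single[simp]: "is_path E [x]" by (simp add: is_path_def)
lemma is_path_Cons2[simp]: "is_path E (x#y#r) \<longleftrightarrow> E x y \<and> is_path E (y#r)"
proof
  assume h: "is_path E (x#y#r)"
  have h': "\<And>i. Suc i < length (x#y#r) \<Longrightarrow> E ((x#y#r)!i) ((x#y#r)!Suc i)" using h unfolding is_path_def by blast
  have "E ((x#y#r)!0) ((x#y#r)!Suc 0)" by (rule h') simp
  then have "E x y" by simp
  moreover have "is_path E (y#r)" unfolding is_path_def
  proof (intro conjI allI impI)
    fix i assume "Suc i < length (y#r)"
    then have "Suc (Suc i) < length (x#y#r)" by simp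
    then have "E ((x#y#r)!Suc i) ((x#y#r)!Suc (Suc i))" using h unfolding is_path_def by blast
    then show "E ((y # r) ! i) ((y # r) ! Suc i)" by simp
  qed simp
  ultimately show "E x y \<and> is_path E (y#r)" by simp
next
  assume h: "E x y \<and> is_path E (y#r)"
  show "is_path E (x#y#r)" unfolding is_path_def
  proof (intro conjI allI impI)
    fix i assume i: "Suc i < length (x#y#r)"
    show "E ((x#y#r) ! i) ((x#y#r) ! Suc i)"
    proof (cases i)
      case 0 then show ?thesis using h by simp
    next
      case (Suc j)
      then have "Suc j < length (y#r)" using i by simp
      then have "E ((y#r)!j) ((y#r)!Suc j)" using h unfolding is_path_def by blast
      then show ?thesis using Suc by simp
    qed
  qed simp
qed

lemma is_path_Cons: "is_path E (x#r) \<longleftrightarrow> (r = [] \<or> (E x (hd r) \<and> is_path E r))"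
  by (cases r) auto

lemma is_path_append: "p \<noteq> [] \<Longrightarrow> q \<noteq> [] \<Longrightarrow>
   is_path E (p@q) \<longleftrightarrow> is_path E p \<and> is_path E q \<and> E (last p) (hd q)"
proof (induction p)
  case Nil then show ?case by simp
next
  case (Cons x p)
  show ?case
  proof (cases p)
    case Nil then show ?thesis using Cons by (cases q) auto
  next
    case (Cons y p') then show ?thesis using Cons.IH Cons.prems by auto
  qed
qed

lemma is_path_take: "is_path E p \<Longrightarrow> 0 < n \<Longrightarrow> is_path E (take n p)"
  unfolding is_path_def by auto

lemma is_path_drop: "is_path E p \<Longrightarrow> n < length p \<Longrightarrow> is_path E (drop n p)"
  unfolding is_path_def by auto

lemma lex_Nil_left: "lex_less ord [] q \<longleftrightarrow> q \<noteq> []"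
  unfolding lex_less_def by auto
lemma lex_Nil_right: "\<not> lex_less ord p []"
  unfolding lex_less_def by auto
lemma lex_irrefl: "\<not> lex_less ord p p"
  unfolding lex_less_def by auto
lemma lex_hd: "lex_less ord (x#p) (y#q) \<Longrightarrow> x = y"
  unfolding lex_less_def
proof (elim disjE exE conjE)
  fix r assume "y # q = (x # p) @ r" then show "x = y" by simp
next
  fix z v1 v2 r1 r2 assume "x # p = z @ v1 # r1" "y # q = z @ v2 # r2" "z \<noteq> []"
  then show "x = y" by (cases z) auto
qed

lemma lex_Cons: "lex_less ord (x#p) (x#q) \<longleftrightarrow> (p = [] \<and> q \<noteq> []) \<or>
   (\<exists>a b p' q'. p = a#p' \<and> q = b#q' \<and> ((a \<noteq> b \<and> ord x a b) \<or> (a = b \<and> lex_less ord p q)))"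
proof
  assume h: "lex_less ord (x#p) (x#q)"
  consider (pre) r where "r \<noteq> []" "x#q = x#p @ r"
    | (div) z v1 v2 r1 r2 where "x#p = z @ v1 # r1" "x#q = z @ v2 # r2" "z \<noteq> []" "v1 \<noteq> v2" "ord (last z) v1 v2"
  proof -
    from h show thesis unfolding lex_less_def
    proof (elim disjE exE conjE)
      fix r assume "r \<noteq> []" "x#q = (x#p) @ r" then show thesis using that(1) by simp
    next
      fix z v1 v2 r1 r2 assume "x#p = z @ v1 # r1" "x#q = z @ v2 # r2" "z \<noteq> []" "v1 \<noteq> v2" "ord (last z) v1 v2"
      then show thesis using that(2) by blast
    qed
  qed
  then show "(p = [] \<and> q \<noteq> []) \<or>
   (\<exists>a b p' q'. p = a#p' \<and> q = b#q' \<and> ((a \<noteq> b \<and> ord x a b) \<or> (a = b \<and> lex_less ord p q)))"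
  proof cases
    case pre
    show ?thesis
    proof (cases p)
      case Nil then show ?thesis using pre by simp
    next
      case (Cons a p')
      then have "lex_less ord p q" using pre unfolding lex_less_def by auto
      then show ?thesis using pre Cons by auto
    qed
  next
    case div
    then obtain z' where z: "z = x # z'" by (cases z) auto
    show ?thesis
    proof (cases z')
      case Nil then show ?thesis using div z by auto
    next
      case (Cons c z'')
      have "lex_less ord p q" unfolding lex_less_def using div z Cons
        by (intro disjI2 exI[of _ z'] exI[of _ v1] exI[of _ v2] exI[of _ r1] exI[of _ r2]) auto
      then show ?thesis using div z Cons by auto
    qed
  qed
next
  assume "(p = [] \<and> q \<noteq> []) \<or>
   (\<exists>a b p' q'. p = a#p' \<and> q = b#q' \<and> ((a \<noteq> b \<and> ord x a b) \<or> (a = b \<and> lex_less ord p q)))"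
  then consider (n) "p = []" "q \<noteq> []" | (d) a b p' q' where "p = a#p'" "q = b#q'" "a \<noteq> b" "ord x a b"
    | (s) a p' q' where "p = a#p'" "q = a#q'" "lex_less ord p q" by (elim disjE exE conjE) auto
  then show "lex_less ord (x#p) (x#q)"
  proof cases
    case n then show ?thesis unfolding lex_less_def by auto
  next
    case d then show ?thesis unfolding lex_less_def
      by (intro disjI2 exI[of _ "[x]"] exI[of _ a] exI[of _ b] exI[of _ p'] exI[of _ q']) auto
  next
    case s
    consider (pre) r where "r \<noteq> []" "q = p @ r"
    | (div) z v1 v2 r1 r2 where "p = z @ v1 # r1" "q = z @ v2 # r2" "z \<noteq> []" "v1 \<noteq> v2" "ord (last z) v1 v2"
    proof -
      from s(3) show thesis unfolding lex_less_def
      proof (elim disjE exE conjE)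
        fix r assume "r \<noteq> []" "q = p @ r" then show thesis using that(1) by simp
      next
        fix z v1 v2 r1 r2 assume "p = z @ v1 # r1" "q = z @ v2 # r2" "z \<noteq> []" "v1 \<noteq> v2" "ord (last z) v1 v2"
        then show thesis using that(2) by blast
      qed
    qed
    then show ?thesis
    proof cases
      case pre then show ?thesis unfolding lex_less_def by auto
    next
      case div then show ?thesis unfolding lex_less_def
        by (intro disjI2 exI[of _ "x#z"] exI[of _ v1] exI[of _ v2] exI[of _ r1] exI[of _ r2]) auto
    qed
  qed
qed

lemma lex_Cons2: "lex_less ord (x#a#p) (x#b#q) \<longleftrightarrow> (a \<noteq> b \<and> ord x a b) \<or> (a = b \<and> lex_less ord (a#p) (b#q))"
  by (subst lex_Cons) auto
lemma lex_Cons1: "lex_less ord [x] (x#q) \<longleftrightarrow> q \<noteq> []"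
  by (subst lex_Cons) auto
lemma lex_Cons1': "\<not> lex_less ord (x#p) [x]"
  by (subst lex_Cons) auto

lemma lex_trans:
  assumes tr: "\<And>u a b c. ord u a b \<Longrightarrow> ord u b c \<Longrightarrow> ord u a c"
    and irr: "\<And>u a. \<not> ord u a a"
  shows "lex_less ord p q \<Longrightarrow> lex_less ord q r \<Longrightarrow> lex_less ord p r"
proof (induction p arbitrary: q r)
  case Nil then show ?case by (metis lex_Nil_left lex_Nil_right)
next
  case (Cons x p)
  note IH = Cons.IH
  obtain y q' where q: "q = y # q'" using Cons.prems by (cases q) (auto simp: lex_Nil_right)
  obtain w r' where r: "r = w # r'" using Cons.prems by (cases r) (auto simp: lex_Nil_right)
  have yx: "y = x" using Cons.prems(1) q lex_hd by metis
  have wx: "w = x" using Cons.prems(2) q r yx lex_hd by metis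
  have A: "lex_less ord (x#p) (x#q')" and B: "lex_less ord (x#q') (x#r')" using Cons.prems q r yx wx by auto
  show ?case unfolding q r yx wx
  proof (cases p)
    case Nil
    then show "lex_less ord (x # p) (x # r')" using B
      by (cases q'; cases r') (auto simp: lex_Cons1 lex_Cons1')
  next
    case (Cons a p')
    obtain b q'' where q': "q' = b # q''" using A Cons by (cases q') (auto simp: lex_Cons1')
    obtain c r'' where r': "r' = c # r''" using B q' by (cases r') (auto simp: lex_Cons1')
    have A2: "(a \<noteq> b \<and> ord x a b) \<or> (a = b \<and> lex_less ord (a#p') (b#q''))" using A Cons q' lex_Cons2 by metis
    have B2: "(b \<noteq> c \<and> ord x b c) \<or> (b = c \<and> lex_less ord (b#q'') (c#r''))" using B r' q' lex_Cons2 by metis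
    have "(a \<noteq> c \<and> ord x a c) \<or> (a = c \<and> lex_less ord (a#p') (c#r''))"
      using A2 B2 proof (elim disjE conjE)
      assume "a \<noteq> b" "ord x a b" "b \<noteq> c" "ord x b c"
      then show ?thesis using tr[of x a b c] irr[of x a] by metis
    next
      assume "a \<noteq> b" "ord x a b" "b = c"
      then show ?thesis by simp
    next
      assume "a = b" "b \<noteq> c" "ord x b c"
      then show ?thesis by simp
    next
      assume "a = b" "lex_less ord (a # p') (b # q'')" "b = c" "lex_less ord (b # q'') (c # r'')"
      then show ?thesis using IH[of "b#q''" "c#r''"] \<open>p = a # p'\<close> by simp
    qed
    then show "lex_less ord (x # p) (x # r')" using Cons r' lex_Cons2 by metis
  qed
qed


lemma lex_prefix: "r \<noteq> [] \<Longrightarrow> lex_less ord p (p @ r)"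
  unfolding lex_less_def by auto

lemma lex_div: "z \<noteq> [] \<Longrightarrow> a \<noteq> b \<Longrightarrow> ord (last z) a b \<Longrightarrow> lex_less ord (z @ a # s) (z @ b # t)"
  unfolding lex_less_def by blast

lemma lex_total:
  assumes tot: "\<And>u a b. E u a \<Longrightarrow> E u b \<Longrightarrow> a \<noteq> b \<Longrightarrow> ord u a b \<or> ord u b a"
  shows "is_path E p \<Longrightarrow> is_path E q \<Longrightarrow> hd p = hd q \<Longrightarrow> p \<noteq> q \<Longrightarrow> lex_less ord p q \<or> lex_less ord q p"
proof (induction p arbitrary: q)
  case Nil then show ?case by simp
next
  case (Cons x p)
  obtain q' where q: "q = x # q'" using Cons.prems by (cases q) auto
  show ?case
  proof (cases p)
    case Nil then show ?thesis using q Cons.prems by (simp add: lex_Cons1)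
  next
    case (Cons a p')
    note C1 = Cons
    show ?thesis
    proof (cases q')
      case Nil then show ?thesis using q C1 by (simp add: lex_Cons1)
    next
      case (Cons b q'')
      note C2 = Cons
      show ?thesis
      proof (cases "a = b")
        case False
        have "E x a" "E x b" using Cons.prems q C1 C2 by auto
        then show ?thesis using tot[of x a b] False q C1 C2 by (auto simp: lex_Cons2)
      next
        case True
        have "is_path E p" "is_path E q'" "hd p = hd q'" "p \<noteq> q'"
          using Cons.prems q C1 C2 True by auto
        then have "lex_less ord p q' \<or> lex_less ord q' p" using Cons.IH by blast
        then show ?thesis using q C1 C2 True by (auto simp: lex_Cons2)
      qed
    qed
  qed
qed

lemma finite_min:
  "finite X \<Longrightarrow> X \<noteq> {} \<Longrightarrow> (\<forall>a b c. a\<in>X \<longrightarrow> b\<in>X \<longrightarrow> c\<in>X \<longrightarrow> r a b \<longrightarrow> r b c \<longrightarrow> r a c)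
   \<Longrightarrow> (\<forall>a b. a\<in>X \<longrightarrow> b\<in>X \<longrightarrow> a\<noteq>b \<longrightarrow> r a b \<or> r b a) \<Longrightarrow> \<exists>m\<in>X. \<forall>x\<in>X. x \<noteq> m \<longrightarrow> r m x"
proof (induction X rule: finite_ne_induct)
  case (singleton x) then show ?case by auto
next
  case (insert x F)
  have tF: "\<forall>a b c. a\<in>F \<longrightarrow> b\<in>F \<longrightarrow> c\<in>F \<longrightarrow> r a b \<longrightarrow> r b c \<longrightarrow> r a c" using insert.prems(1) by blast
  have oF: "\<forall>a b. a\<in>F \<longrightarrow> b\<in>F \<longrightarrow> a\<noteq>b \<longrightarrow> r a b \<or> r b a" using insert.prems(2) by blast
  obtain m where m: "m \<in> F" "\<forall>y\<in>F. y \<noteq> m \<longrightarrow> r m y" using insert.IH[OF tF oF] by blast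
  have "x \<noteq> m" using insert.hyps m(1) by blast
  then have "r x m \<or> r m x" using insert.prems(2) m(1) by blast
  then show ?case
  proof
    assume "r x m"
    show ?thesis
    proof (intro bexI[of _ x] ballI impI)
      fix y assume "y \<in> insert x F" "y \<noteq> x"
      then have yF: "y \<in> F" by simp
      show "r x y"
      proof (cases "y = m")
        case True then show ?thesis using \<open>r x m\<close> by simp
      next
        case False then have "r m y" using m yF by blast
        then show ?thesis using insert.prems(1) \<open>r x m\<close> yF m(1) by blast
      qed
    qed simp
  next
    assume "r m x"
    then show ?thesis using m by blast
  qed
qed

lemma exists_sorted:
  "finite X \<Longrightarrow> (\<forall>a b c. a\<in>X \<longrightarrow> b\<in>X \<longrightarrow> c\<in>X \<longrightarrow> r a b \<longrightarrow> r b c \<longrightarrow> r a c)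
   \<Longrightarrow> (\<forall>a b. a\<in>X \<longrightarrow> b\<in>X \<longrightarrow> a\<noteq>b \<longrightarrow> r a b \<or> r b a) \<Longrightarrow> \<exists>xs. set xs = X \<and> distinct xs \<and> sorted_wrt r xs"
proof (induction "card X" arbitrary: X rule: less_induct)
  case less
  show ?case
  proof (cases "X = {}")
    case True then show ?thesis by auto
  next
    case False
    obtain m where m: "m \<in> X" "\<forall>x\<in>X. x \<noteq> m \<longrightarrow> r m x" using finite_min[OF less.prems(1) False less.prems(2,3)] by blast
    have c: "card (X - {m}) < card X" using m(1) less.prems(1) by (metis card_Diff1_less)
    have f: "finite (X - {m})" using less.prems(1) by simp
    have t: "\<forall>a b c. a\<in>X-{m} \<longrightarrow> b\<in>X-{m} \<longrightarrow> c\<in>X-{m} \<longrightarrow> r a b \<longrightarrow> r b c \<longrightarrow> r a c" using less.prems(2) by blast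
    have o: "\<forall>a b. a\<in>X-{m} \<longrightarrow> b\<in>X-{m} \<longrightarrow> a\<noteq>b \<longrightarrow> r a b \<or> r b a" using less.prems(3) by blast
    obtain xs where xs: "set xs = X - {m}" "distinct xs" "sorted_wrt r xs"
      using less.hyps[OF c f t o] by blast
    show ?thesis using xs m by (intro exI[of _ "m # xs"]) auto
  qed
qed

lemma exit_point: "xs \<noteq> [] \<Longrightarrow> hd xs \<in> A \<Longrightarrow> last xs \<notin> A \<Longrightarrow> \<exists>i. Suc i < length xs \<and> xs!i \<in> A \<and> xs!Suc i \<notin> A"
proof (induction xs)
  case Nil then show ?case by simp
next
  case (Cons x xs)
  show ?case
  proof (cases xs)
    case Nil then show ?thesis using Cons by simp
  next
    case (Cons y ys)
    show ?thesis
    proof (cases "y \<in> A")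
      case False then show ?thesis using Cons \<open>hd (x # xs) \<in> A\<close> by (intro exI[of _ 0]) auto
    next
      case True
      then obtain i where "Suc i < length xs" "xs!i \<in> A" "xs!Suc i \<notin> A" using Cons.IH Cons.prems Cons by auto
      then show ?thesis by (intro exI[of _ "Suc i"]) auto
    qed
  qed
qed

lemma splice:
  assumes pa: "is_path E (q@r)" and dq: "distinct q" and dr: "distinct r" and qn: "q \<noteq> []" and rn: "r \<noteq> []"
  shows "\<exists>i l. i \<le> length q \<and> l < length r \<and> is_path E (take i q @ drop l r) \<and> distinct (take i q @ drop l r)
     \<and> (i < length q \<longrightarrow> q!i = r!l) \<and> (\<forall>j<i. q!j \<notin> set r)"
proof (cases "\<exists>j<length q. q!j \<in> set r")
  case False
  have pr: "is_path E q" "is_path E r" using pa qn rn is_path_append by blast+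
  have "distinct (q @ r)" using False dq dr by (auto simp: in_set_conv_nth)
  then show ?thesis using pa False rn by (intro exI[of _ "length q"] exI[of _ 0]) auto
next
  case True
  define i where "i = (LEAST j. j < length q \<and> q!j \<in> set r)"
  have i: "i < length q" "q!i \<in> set r" using LeastI_ex[OF True] unfolding i_def by auto
  have before: "\<forall>j<i. q!j \<notin> set r" using not_less_Least i unfolding i_def
    by (metis (no_types, lifting) order.strict_trans)
  obtain l where l: "l < length r" "r!l = q!i" using i by (metis in_set_conv_nth)
  have pr: "is_path E q" "is_path E r" using pa qn rn is_path_append by blast+
  have pd: "is_path E (drop l r)" using is_path_drop[OF pr(2) l(1)] .
  have path: "is_path E (take i q @ drop l r)"
  proof (cases "i = 0")
    case True then show ?thesis using pd by simp
  next
    case False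
    have t: "is_path E (take i q)" using is_path_take[OF pr(1)] False by simp
    have lt: "last (take i q) = q!(i-1)" using False i by (subst last_conv_nth) (auto simp: min_def)
    have hd: "hd (drop l r) = q!i" using l by (simp add: hd_drop_conv_nth)
    have "Suc (i-1) < length q" using i False by simp
    then have "E (q!(i-1)) (q!Suc (i-1))" using pr(1) unfolding is_path_def by blast
    then have "E (last (take i q)) (hd (drop l r))" using lt hd False by simp
    moreover have "take i q \<noteq> []" "drop l r \<noteq> []" using False i l by auto
    ultimately show ?thesis using t pd is_path_append by blast
  qed
  have "set (take i q) \<inter> set (drop l r) = {}"
  proof -
    { fix x assume "x \<in> set (take i q)" "x \<in> set (drop l r)"
      then obtain j where "j < i" "q!j = x" using i by (auto simp: in_set_conv_nth)
      then have False using before \<open>x \<in> set (drop l r)\<close> by (metis in_set_dropD) }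
    then show ?thesis by blast
  qed
  then have "distinct (take i q @ drop l r)" using dq dr by simp
  then show ?thesis using i l path before by (intro exI[of _ i] exI[of _ l]) auto
qed



locale lg =
  fixes V :: "'a set" and E :: "'a \<Rightarrow> 'a \<Rightarrow> bool" and ord :: "'a \<Rightarrow> 'a \<Rightarrow> 'a \<Rightarrow> bool" and v0 :: 'a
  assumes eo: "edge_ordered V E ord" and cn: "connected_from V E v0"
begin

abbreviation P where "P \<equiv> min_path E ord v0"
abbreviation lx where "lx \<equiv> lex_less ord"

lemma fin: "finite V" using eo unfolding edge_ordered_def by blast
lemma eV: "E u v \<Longrightarrow> u \<in> V \<and> v \<in> V" using eo unfolding edge_ordered_def by blast
lemma oE: "ord u a b \<Longrightarrow> E u a \<and> E u b" using eo unfolding edge_ordered_def by blast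
lemma irr: "\<not> ord u a a" using eo unfolding edge_ordered_def by blast
lemma tr: "ord u a b \<Longrightarrow> ord u b c \<Longrightarrow> ord u a c" using eo unfolding edge_ordered_def by blast
lemma tot: "E u a \<Longrightarrow> E u b \<Longrightarrow> a \<noteq> b \<Longrightarrow> ord u a b \<or> ord u b a" using eo unfolding edge_ordered_def by blast
lemma v0V: "v0 \<in> V" using cn unfolding connected_from_def by blast
lemma reach: "v \<in> V \<Longrightarrow> E\<^sup>*\<^sup>* v0 v" using cn unfolding connected_from_def by blast

lemma lx_trans: "lx p q \<Longrightarrow> lx q r \<Longrightarrow> lx p r"
  using lex_trans[of ord p q r] tr irr by blast
lemma lx_asym: "lx p q \<Longrightarrow> \<not> lx q p"
  using lx_trans lex_irrefl by blast

lemma path_V: "is_path E p \<Longrightarrow> hd p \<in> V \<Longrightarrow> set p \<subseteq> V"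
proof
  fix x assume p: "is_path E p" "hd p \<in> V" and x: "x \<in> set p"
  then obtain k where k: "k < length p" "p!k = x" by (auto simp: in_set_conv_nth)
  show "x \<in> V"
  proof (cases k)
    case 0 then show ?thesis using p k by (simp add: hd_conv_nth)
  next
    case (Suc j)
    then have "E (p!j) (p!Suc j)" using p k unfolding is_path_def by blast
    then show ?thesis using eV k Suc by blast
  qed
qed

lemma proper_V: "proper_path E v0 v p \<Longrightarrow> set p \<subseteq> V"
  unfolding proper_path_def using path_V v0V by blast

lemma exists_proper: "v \<in> V \<Longrightarrow> \<exists>p. proper_path E v0 v p"
proof -
  assume "v \<in> V"
  then have "E\<^sup>*\<^sup>* v0 v" by (rule reach)
  then show ?thesis
  proof (induction rule: rtranclp_induct)
    case base then show ?case by (intro exI[of _ "[v0]"]) (simp add: proper_path_def)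
  next
    case (step y z)
    then obtain p where p: "proper_path E v0 y p" by blast
    then have pp: "is_path E p" "distinct p" "hd p = v0" "last p = y" "p \<noteq> []" unfolding proper_path_def is_path_def by auto
    show ?case
    proof (cases "z \<in> set p")
      case True
      then obtain k where k: "k < length p" "p!k = z" by (auto simp: in_set_conv_nth)
      have l: "last (take (Suc k) p) = z" using k by (simp add: take_Suc_conv_app_nth)
      have h: "hd (take (Suc k) p) = v0" using pp by simp
      have "proper_path E v0 z (take (Suc k) p)" unfolding proper_path_def
        using pp k is_path_take[OF pp(1), of "Suc k"] l h by simp
      then show ?thesis by blast
    next
      case False
      have "is_path E (p @ [z])" using is_path_append[of p "[z]" E] pp step by simp
      then have "proper_path E v0 z (p @ [z])" unfolding proper_path_def using pp False by auto
      then show ?thesis by blast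
    qed
  qed
qed

lemma finite_proper: "finite {p. proper_path E v0 v p}"
proof (rule finite_subset)
  show "{p. proper_path E v0 v p} \<subseteq> {xs. set xs \<subseteq> V \<and> length xs \<le> card V}"
  proof
    fix p assume "p \<in> {p. proper_path E v0 v p}"
    then have p: "proper_path E v0 v p" by simp
    have s: "set p \<subseteq> V" using proper_V[OF p] by blast
    have "distinct p" using p unfolding proper_path_def by blast
    then have "length p \<le> card V" using card_mono[OF fin s] by (simp add: distinct_card)
    then show "p \<in> {xs. set xs \<subseteq> V \<and> length xs \<le> card V}" using s by simp
  qed
  show "finite {xs. set xs \<subseteq> V \<and> length xs \<le> card V}" using finite_lists_length_le[OF fin] .
qed

lemma P_spec: "v \<in> V \<Longrightarrow> proper_path E v0 v (P v) \<and> (\<forall>q. proper_path E v0 v q \<longrightarrow> q \<noteq> P v \<longrightarrow> lx (P v) q)"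
proof -
  assume v: "v \<in> V"
  let ?X = "{p. proper_path E v0 v p}"
  have ne: "?X \<noteq> {}" using exists_proper[OF v] by blast
  have t: "\<forall>a b c. a\<in>?X \<longrightarrow> b\<in>?X \<longrightarrow> c\<in>?X \<longrightarrow> lx a b \<longrightarrow> lx b c \<longrightarrow> lx a c" using lx_trans by blast
  have o: "\<forall>a b. a\<in>?X \<longrightarrow> b\<in>?X \<longrightarrow> a\<noteq>b \<longrightarrow> lx a b \<or> lx b a"
  proof (intro allI impI)
    fix a b assume "a \<in> ?X" "b \<in> ?X" "a \<noteq> b"
    then show "lx a b \<or> lx b a" using lex_total[of E ord a b] tot unfolding proper_path_def by auto
  qed
  obtain m where "m \<in> ?X" "\<forall>x\<in>?X. x \<noteq> m \<longrightarrow> lx m x" using finite_min[OF finite_proper ne t o] by blast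
  then have "\<exists>p. proper_path E v0 v p \<and> (\<forall>q. proper_path E v0 v q \<longrightarrow> q \<noteq> p \<longrightarrow> lx p q)" by auto
  then show ?thesis unfolding min_path_def by (rule someI_ex)
qed

lemma P_proper: "v \<in> V \<Longrightarrow> proper_path E v0 v (P v)" using P_spec by blast
lemma P_min: "v \<in> V \<Longrightarrow> proper_path E v0 v q \<Longrightarrow> q \<noteq> P v \<Longrightarrow> lx (P v) q" using P_spec by blast
lemma P_path: "v \<in> V \<Longrightarrow> is_path E (P v)" using P_proper unfolding proper_path_def by blast
lemma P_dist: "v \<in> V \<Longrightarrow> distinct (P v)" using P_proper unfolding proper_path_def by blast
lemma P_hd: "v \<in> V \<Longrightarrow> hd (P v) = v0" using P_proper unfolding proper_path_def by blast
lemma P_last: "v \<in> V \<Longrightarrow> last (P v) = v" using P_proper unfolding proper_path_def by blast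
lemma P_ne: "v \<in> V \<Longrightarrow> P v \<noteq> []" using P_path by fastforce
lemma P_set: "v \<in> V \<Longrightarrow> set (P v) \<subseteq> V" using P_proper proper_V by blast
lemma P_inj: "u \<in> V \<Longrightarrow> v \<in> V \<Longrightarrow> P u = P v \<Longrightarrow> u = v" using P_last by metis

lemma proper_v0: "proper_path E v0 v0 p \<Longrightarrow> p = [v0]"
proof -
  assume h: "proper_path E v0 v0 p"
  then obtain p' where p: "p = v0 # p'" unfolding proper_path_def is_path_def by (cases p) auto
  show ?thesis
  proof (cases "p' = []")
    case False
    then have "last p' = v0" using h p unfolding proper_path_def by simp
    then have "v0 \<in> set p'" using False last_in_set by metis
    then show ?thesis using h p unfolding proper_path_def by simp
  qed (use p in simp)
qed

lemma P_v0: "P v0 = [v0]" using P_proper[OF v0V] proper_v0 by blast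

lemma P_le: "v \<in> V \<Longrightarrow> proper_path E v0 v q \<Longrightarrow> P v = q \<or> lx (P v) q" using P_min by blast


lemma P_prefix:
  assumes v: "v \<in> V" and k: "k < length (P v)"
  shows "P (P v ! k) = take (Suc k) (P v)"
proof (rule ccontr)
  define A where "A = P v"
  define y where "y = A ! k"
  define t where "t = take (Suc k) A"
  assume ne: "P (P v ! k) \<noteq> take (Suc k) (P v)"
  have Ap: "is_path E A" "distinct A" "hd A = v0" "last A = v" "A \<noteq> []"
    using P_path[OF v] P_dist[OF v] P_hd[OF v] P_last[OF v] P_ne[OF v] unfolding A_def by auto
  have kA: "k < length A" using k unfolding A_def .
  have yV: "y \<in> V" using P_set[OF v] kA unfolding y_def A_def by (auto simp: set_conv_nth)
  have tl: "last t = y" unfolding t_def y_def using kA by (simp add: take_Suc_conv_app_nth)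
  have th: "hd t = v0" unfolding t_def using Ap by simp
  have tp: "proper_path E v0 y t" unfolding proper_path_def
    using is_path_take[OF Ap(1), of "Suc k"] Ap(2) tl th unfolding t_def by simp
  define q where "q = P y"
  have qp: "is_path E q" "distinct q" "hd q = v0" "last q = y" "q \<noteq> []"
    using P_path[OF yV] P_dist[OF yV] P_hd[OF yV] P_last[OF yV] P_ne[OF yV] unfolding q_def by auto
  have qt: "q \<noteq> t" using ne unfolding q_def y_def t_def A_def by simp
  then have lqt: "lx q t" using P_min[OF yV tp] unfolding q_def by simp
  have k1: "Suc k < length A"
  proof (rule ccontr)
    assume "\<not> Suc k < length A"
    then have kk: "k = length A - 1" using kA by simp
    then have "t = A" "y = v" using kA Ap unfolding t_def y_def by (auto simp: last_conv_nth)
    then show False using qt unfolding q_def A_def by simp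
  qed
  define r where "r = drop (Suc k) A"
  have Atr: "A = t @ r" unfolding t_def r_def by simp
  have rne: "r \<noteq> []" using k1 unfolding r_def by simp
  have dr: "distinct r" using Ap(2) unfolding r_def by simp
  have dtr: "set t \<inter> set r = {}" using Ap(2) Atr by (metis distinct_append)
  have rl: "last r = v" using Ap(4) Atr rne by simp
  have rp: "is_path E r" using is_path_drop[OF Ap(1) k1] unfolding r_def .
  have "E (A!k) (A!Suc k)" using Ap(1) k1 unfolding is_path_def by blast
  moreover have "hd r = A!Suc k" unfolding r_def using k1 by (simp add: hd_drop_conv_nth)
  ultimately have "E (last q) (hd r)" using qp(4) unfolding y_def by simp
  then have qrp: "is_path E (q @ r)" using is_path_append[OF qp(5) rne] qp(1) rp by blast
  from lqt consider (pre) s where "s \<noteq> []" "t = q @ s"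
    | (div) z a b s1 s2 where "q = z @ a # s1" "t = z @ b # s2" "z \<noteq> []" "a \<noteq> b" "ord (last z) a b"
  proof -
    from lqt show thesis unfolding lex_less_def
    proof (elim disjE exE conjE)
      fix s assume "s \<noteq> []" "t = q @ s" then show thesis using that(1) by simp
    next
      fix z a b s1 s2 assume "q = z @ a # s1" "t = z @ b # s2" "z \<noteq> []" "a \<noteq> b" "ord (last z) a b"
      then show thesis using that(2) by blast
    qed
  qed
  then show False
  proof cases
    case pre
    have dt: "distinct t" using tp unfolding proper_path_def by blast
    have "last t = last s" using pre by simp
    moreover have "last s \<in> set s" using pre(1) by simp
    moreover have "y \<in> set q" using qp(4,5) last_in_set by metis
    ultimately show False using dt pre tl by auto
  next
    case div
    obtain i l where il: "i \<le> length q" "l < length r" "is_path E (take i q @ drop l r)"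
      "distinct (take i q @ drop l r)" "i < length q \<longrightarrow> q!i = r!l" "\<forall>j<i. q!j \<notin> set r"
      using splice[OF qrp qp(2) dr qp(5) rne] by blast
    define W where "W = take i q @ drop l r"
    have zq: "\<forall>j<length z. q!j \<notin> set r"
    proof (intro allI impI)
      fix j assume j: "j < length z"
      have "q!j = z!j" using div(1) j by (simp add: nth_append)
      also have "\<dots> = t!j" using div(2) j by (simp add: nth_append)
      finally have "q!j = t!j" .
      moreover have "j < length t" using div(2) j by simp
      ultimately have "q!j \<in> set t" by simp
      then show "q!j \<notin> set r" using dtr by blast
    qed
    have lq: "length z < length q" using div(1) by simp
    have iz: "length z \<le> i"
    proof (rule ccontr)
      assume "\<not> length z \<le> i"
      then have "i < length z" by simp
      then have "q!i = r!l" "q!i \<notin> set r" using il(5) zq lq by auto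
      then show False using il(2) by simp
    qed
    obtain W' where W: "W = z @ a # W'"
    proof (cases "i = length z")
      case True
      then have "take i q = z" using div(1) by simp
      moreover have "r!l = a" using il(5) True lq div(1) by simp
      moreover have "drop l r = r!l # drop (Suc l) r" using il(2) by (simp add: Cons_nth_drop_Suc)
      ultimately show ?thesis using that unfolding W_def by simp
    next
      case False
      then have "i > length z" using iz by simp
      then have "take i q = z @ a # take (i - Suc (length z)) s1" using div(1)
        by (simp add: take_append take_Cons') 
      then show ?thesis using that unfolding W_def by simp
    qed
    have Wh: "hd W = v0" using W div(3) qp(3) div(1) by simp
    have Wl: "last W = v" unfolding W_def using il(2) rl by simp
    have Wp: "proper_path E v0 v W" unfolding proper_path_def using il(3,4) Wh Wl W_def by simp
    have Adiv: "A = z @ b # (s2 @ r)" using Atr div(2) by simp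
    have "lx W A" unfolding W Adiv using lex_div[of z a b ord, OF div(3,4,5)] by simp
    moreover have "W \<noteq> A" using W Adiv div(4) by simp
    then have "lx A W" using P_min[OF v Wp] unfolding A_def by simp
    ultimately show False using lx_asym by blast
  qed
qed


lemma P_prefix2: "v \<in> V \<Longrightarrow> P v = xs @ ys \<Longrightarrow> xs \<noteq> [] \<Longrightarrow> P (last xs) = xs"
proof -
  assume v: "v \<in> V" and e: "P v = xs @ ys" and ne: "xs \<noteq> []"
  define k where "k = length xs - 1"
  have k: "k < length (P v)" using e ne unfolding k_def by (cases xs) auto
  have "P v ! k = last xs" using e ne unfolding k_def by (simp add: nth_append last_conv_nth)
  moreover have "take (Suc k) (P v) = xs" using e ne unfolding k_def by simp
  ultimately show ?thesis using P_prefix[OF v k] by simp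
qed

lemma P_set_le: "v \<in> V \<Longrightarrow> y \<in> set (P v) \<Longrightarrow> P y = P v \<or> lx (P y) (P v)"
proof -
  assume v: "v \<in> V" and y: "y \<in> set (P v)"
  then obtain k where k: "k < length (P v)" "P v ! k = y" by (auto simp: in_set_conv_nth)
  have e: "P y = take (Suc k) (P v)" using P_prefix[OF v k(1)] k(2) by simp
  show ?thesis
  proof (cases "drop (Suc k) (P v) = []")
    case True then show ?thesis using e by simp
  next
    case False
    have "P v = P y @ drop (Suc k) (P v)" using e by simp
    then show ?thesis using lex_prefix[OF False, of ord "P y"] by metis
  qed
qed

lemma pre_le: "P w = X @ s \<Longrightarrow> X = P w \<or> lx X (P w)"
  by (cases "s = []") (auto intro: lex_prefix)

lemma closed: "set L \<subseteq> V \<Longrightarrow> (\<forall>w\<in>set L. \<forall>w'\<in>V - set L. lx (P w) (P w')) \<Longrightarrow> p \<in> set L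
  \<Longrightarrow> y \<in> set (P p) \<Longrightarrow> y \<in> set L"
proof (rule ccontr)
  assume L: "set L \<subseteq> V" and sep: "\<forall>w\<in>set L. \<forall>w'\<in>V - set L. lx (P w) (P w')" and p: "p \<in> set L"
    and y: "y \<in> set (P p)" and ny: "y \<notin> set L"
  have pV: "p \<in> V" using L p by blast
  have yV: "y \<in> V" using P_set[OF pV] y by blast
  have "lx (P p) (P y)" using sep p yV ny by blast
  moreover have "P y = P p \<or> lx (P y) (P p)" using P_set_le[OF pV y] .
  ultimately show False using lx_asym lex_irrefl by metis
qed

lemma entry: "w \<in> V \<Longrightarrow> w \<notin> set L \<Longrightarrow> v0 \<in> set L \<Longrightarrow>
  \<exists>a b s. a \<in> set L \<and> b \<notin> set L \<and> b \<in> V \<and> P b = P a @ [b] \<and> P w = P b @ s"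
proof -
  assume w: "w \<in> V" "w \<notin> set L" and v0L: "v0 \<in> set L"
  obtain i where i: "Suc i < length (P w)" "P w ! i \<in> set L" "P w ! Suc i \<notin> set L"
    using exit_point[of "P w" "set L"] P_ne[OF w(1)] P_hd[OF w(1)] P_last[OF w(1)] w v0L by auto
  define a where "a = P w ! i"
  define b where "b = P w ! Suc i"
  have bV: "b \<in> V" using P_set[OF w(1)] i unfolding b_def by (auto simp: set_conv_nth)
  have Pb: "P b = take (Suc (Suc i)) (P w)" using P_prefix[OF w(1) i(1)] unfolding b_def .
  have Pa: "P a = take (Suc i) (P w)" using P_prefix[OF w(1)] i(1) unfolding a_def by simp
  have "P b = P a @ [b]" using Pa Pb i(1) unfolding b_def by (simp add: take_Suc_conv_app_nth)
  moreover have "P w = P b @ drop (Suc (Suc i)) (P w)" using Pb by simp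
  ultimately show ?thesis using i bV unfolding a_def b_def by blast
qed

lemma sn: "set (sorted_nbrs E ord v L) = {w. E v w \<and> w \<notin> set L} \<and> distinct (sorted_nbrs E ord v L)
   \<and> sorted_wrt (ord v) (sorted_nbrs E ord v L)"
proof -
  let ?X = "{w. E v w \<and> w \<notin> set L}"
  have f: "finite ?X" using fin eV by (metis (no_types, lifting) finite_subset mem_Collect_eq subsetI)
  have t: "\<forall>a b c. a\<in>?X \<longrightarrow> b\<in>?X \<longrightarrow> c\<in>?X \<longrightarrow> ord v a b \<longrightarrow> ord v b c \<longrightarrow> ord v a c" using tr by blast
  have o: "\<forall>a b. a\<in>?X \<longrightarrow> b\<in>?X \<longrightarrow> a\<noteq>b \<longrightarrow> ord v a b \<or> ord v b a" using tot by blast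
  have "\<exists>xs. set xs = ?X \<and> distinct xs \<and> sorted_wrt (ord v) xs" using exists_sorted[OF f t o] .
  then show ?thesis unfolding sorted_nbrs_def by (rule someI_ex)
qed

lemma dfs_exists: "set L \<subseteq> V \<Longrightarrow> distinct L \<Longrightarrow> set S \<subseteq> V \<Longrightarrow> \<exists>L'. dfs_run E ord L S L'"
proof (induction "card V - length L" arbitrary: L S rule: less_induct)
  case less
  show ?case using less.prems(3)
  proof (induction S)
    case Nil then show ?case using dfs_run.stop by blast
  next
    case (Cons v S)
    show ?case
    proof (cases "v \<in> set L")
      case True
      then show ?thesis using Cons dfs_run.skip by (metis insert_subset list.simps(15))
    next
      case False
      let ?N = "sorted_nbrs E ord v (L @ [v])"
      have vV: "v \<in> V" using Cons.prems by simp
      have "card (set L) < card V" using less.prems(1) vV False fin by (metis psubset_card_mono psubsetI)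
      then have lt: "card V - length (L @ [v]) < card V - length L" using distinct_card[OF less.prems(2)] by simp
      have L1: "set (L @ [v]) \<subseteq> V" "distinct (L @ [v])" using less.prems vV False by auto
      have "set ?N \<subseteq> V" using sn eV by blast
      then have "set (?N @ S) \<subseteq> V" using Cons.prems by simp
      then obtain L' where "dfs_run E ord (L @ [v]) (?N @ S) L'" using less.hyps[OF lt L1] by blast
      then have "dfs_run E ord L (v#S) L'" by (rule dfs_run.visit[OF False])
      then show ?thesis by blast
    qed
  qed
qed

end

lemma dfs_det: "dfs_run E ord L S L1 \<Longrightarrow> dfs_run E ord L S L2 \<Longrightarrow> L1 = L2"
proof (induction arbitrary: L2 rule: dfs_run.induct)
  case (stop L) from stop.prems show ?case by (cases rule: dfs_run.cases) simp_all
next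
  case (skip v L S L')
  from skip.prems show ?case
  proof (cases rule: dfs_run.cases)
    case skip then show ?thesis using \<open>\<And>L2. dfs_run E ord L S L2 \<Longrightarrow> L' = L2\<close> by simp
  next
    case visit then show ?thesis using \<open>v \<in> set L\<close> by simp
  qed
next
  case (visit v L S L')
  from visit.prems show ?case
  proof (cases rule: dfs_run.cases)
    case skip then show ?thesis using \<open>v \<notin> set L\<close> by simp
  next
    case visit then show ?thesis using \<open>\<And>L2. dfs_run E ord (L @ [v]) (sorted_nbrs E ord v (L @ [v]) @ S) L2 \<Longrightarrow> L' = L2\<close> by simp
  qed
qed

lemma dfs_prefix: "dfs_run E ord L S L' \<Longrightarrow> \<exists>r. L' = L @ r"
  by (induction rule: dfs_run.induct) auto



lemma lex_snoc: "lex_less ord X Y \<Longrightarrow> \<not>(\<exists>r. r \<noteq> [] \<and> Y = X @ r) \<Longrightarrow> lex_less ord (X @ [n]) Y"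
  unfolding lex_less_def
  apply (elim disjE exE conjE)
   apply blast
  subgoal for z v1 v2 r1 r2
    by (intro disjI2 exI[of _ z] exI[of _ v1] exI[of _ v2] exI[of _ "r1 @ [n]"] exI[of _ r2]) simp
  done

context lg begin

abbreviation kr where "kr \<equiv> (\<lambda>x y. lx (P (fst x) @ [snd x]) (P (fst y) @ [snd y]))"

definition Stk where "Stk L S ps \<longleftrightarrow> length ps = length S \<and> set ps \<subseteq> set L \<and> (\<forall>i<length S. E (ps!i) (S!i))
  \<and> sorted_wrt kr (zip ps S)
  \<and> (\<forall>a b. a \<in> set L \<longrightarrow> b \<in> V \<longrightarrow> b \<notin> set L \<longrightarrow> P b = P a @ [b] \<longrightarrow> (a,b) \<in> set (zip ps S))"

definition Inv where "Inv L S \<longleftrightarrow> v0 \<in> set L \<and> distinct L \<and> set L \<subseteq> V \<and> sorted_wrt (\<lambda>a b. lx (P a) (P b)) L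
  \<and> (\<forall>w\<in>set L. \<forall>w'\<in>V - set L. lx (P w) (P w')) \<and> (\<exists>ps. Stk L S ps)"

lemma snoc_sorted: "v \<in> V \<Longrightarrow> sorted_wrt (ord v) N \<Longrightarrow> sorted_wrt kr (map (Pair v) N)"
proof -
  assume v: "v \<in> V" and s: "sorted_wrt (ord v) N"
  have "sorted_wrt (\<lambda>a b. lx (P v @ [a]) (P v @ [b])) N"
  proof (rule sorted_wrt_mono_rel[OF _ s])
    fix a b assume "ord v a b"
    moreover have "a \<noteq> b" using calculation irr by metis
    ultimately show "lx (P v @ [a]) (P v @ [b])" using lex_div[of "P v" a b ord "[]" "[]"] P_ne[OF v] P_last[OF v] by simp
  qed
  then show ?thesis by (simp add: sorted_wrt_map)
qed

lemma zip_rep: "length ps' = length S \<Longrightarrow> zip (replicate (length N) v @ ps') (N @ S) = map (Pair v) N @ zip ps' S"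
  by (simp add: zip_append zip_replicate1)

lemma inv_init: "Inv [v0] (sorted_nbrs E ord v0 [v0])"
proof -
  define N where "N = sorted_nbrs E ord v0 [v0]"
  have Ns: "set N = {w. E v0 w \<and> w \<notin> set [v0]}" "sorted_wrt (ord v0) N" using sn unfolding N_def by blast+
  define ps where "ps = replicate (length N) v0"
  have z: "zip ps N = map (Pair v0) N" unfolding ps_def using zip_rep[of "[]" "[]" N v0] by simp
  have sep: "\<forall>w\<in>set [v0]. \<forall>w'\<in>V - set [v0]. lx (P w) (P w')"
  proof (intro ballI)
    fix w w' assume "w \<in> set [v0]" "w' \<in> V - set [v0]"
    then have w: "w = v0" "w' \<in> V" "w' \<noteq> v0" by auto
    obtain t where t: "P w' = v0 # t" using P_ne[OF w(2)] P_hd[OF w(2)] by (cases "P w'") auto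
    have "t \<noteq> []" using t P_v0 P_inj[OF w(2) v0V] w by auto
    then show "lx (P w) (P w')" using t w P_v0 lex_prefix[of t ord "[v0]"] by simp
  qed
  have "Stk [v0] N ps" unfolding Stk_def
  proof (intro conjI allI impI)
    show "length ps = length N" unfolding ps_def by simp
    show "set ps \<subseteq> set [v0]" unfolding ps_def by auto
    fix i assume "i < length N" then show "E (ps!i) (N!i)" using Ns unfolding ps_def by (auto simp: set_conv_nth)
  next
    show "sorted_wrt kr (zip ps N)" unfolding z using snoc_sorted[OF v0V Ns(2)] .
  next
    fix a b assume h: "a \<in> set [v0]" "b \<in> V" "b \<notin> set [v0]" "P b = P a @ [b]"
    then have "a = v0" by simp
    then have "is_path E ([v0] @ [b])" using h(4) P_path[OF h(2)] P_v0 by simp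
    then have "E v0 b" by simp
    then have "b \<in> set N" using Ns h by simp
    then show "(a, b) \<in> set (zip ps N)" unfolding z using \<open>a = v0\<close> by auto
  qed
  then show ?thesis unfolding Inv_def N_def using sep v0V by auto
qed

lemma inv_skip: "Inv L (v#S) \<Longrightarrow> v \<in> set L \<Longrightarrow> Inv L S"
proof -
  assume I: "Inv L (v#S)" and vL: "v \<in> set L"
  from I obtain ps where st: "Stk L (v#S) ps" unfolding Inv_def by blast
  from st obtain p ps' where ps: "ps = p # ps'" unfolding Stk_def by (cases ps) auto
  have "Stk L S ps'" unfolding Stk_def
  proof (intro conjI allI impI)
    show "length ps' = length S" using st ps unfolding Stk_def by simp
    show "set ps' \<subseteq> set L" using st ps unfolding Stk_def by simp
    fix i assume "i < length S"
    then have "Suc i < length (v#S)" by simp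
    then have "E (ps!Suc i) ((v#S)!Suc i)" using st unfolding Stk_def by blast
    then show "E (ps'!i) (S!i)" using ps by simp
  next
    show "sorted_wrt kr (zip ps' S)" using st ps unfolding Stk_def by simp
  next
    fix a b assume h: "a \<in> set L" "b \<in> V" "b \<notin> set L" "P b = P a @ [b]"
    then have "(a,b) \<in> set (zip ps (v#S))" using st unfolding Stk_def by blast
    then show "(a,b) \<in> set (zip ps' S)" using ps h(3) vL by auto
  qed
  then show ?thesis using I unfolding Inv_def by blast
qed

lemma inv_stop: "Inv L [] \<Longrightarrow> set L = V"
proof -
  assume I: "Inv L []"
  have LV: "set L \<subseteq> V" and v0L: "v0 \<in> set L" using I unfolding Inv_def by auto
  from I obtain ps where st: "Stk L [] ps" unfolding Inv_def by blast
  have "V \<subseteq> set L"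
  proof
    fix w assume w: "w \<in> V"
    show "w \<in> set L"
    proof (rule ccontr)
      assume "w \<notin> set L"
      then obtain a b s where "a \<in> set L" "b \<notin> set L" "b \<in> V" "P b = P a @ [b]" using entry[OF w _ v0L] by blast
      then have "(a,b) \<in> set (zip ps [])" using st unfolding Stk_def by blast
      then show False by simp
    qed
  qed
  then show ?thesis using LV by blast
qed


lemma inv_visit:
  assumes I: "Inv L (v#S)" and nv: "v \<notin> set L"
  shows "Inv (L@[v]) (sorted_nbrs E ord v (L@[v]) @ S)"
proof -
  from I have v0L: "v0 \<in> set L" and dL: "distinct L" and LV: "set L \<subseteq> V"
    and sL: "sorted_wrt (\<lambda>a b. lx (P a) (P b)) L"
    and sep: "\<forall>w\<in>set L. \<forall>w'\<in>V - set L. lx (P w) (P w')" unfolding Inv_def by auto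
  from I obtain ps where st: "Stk L (v#S) ps" unfolding Inv_def by blast
  from st obtain p ps' where ps: "ps = p # ps'" unfolding Stk_def by (cases ps) auto
  have lens: "length ps' = length S" using st ps unfolding Stk_def by simp
  have pL: "p \<in> set L" and ps'L: "set ps' \<subseteq> set L" using st ps unfolding Stk_def by auto
  have "0 < length (v#S)" by simp
  then have "E (ps!0) ((v#S)!0)" using st unfolding Stk_def by blast
  then have Epv: "E p v" using ps by simp
  have edS: "\<forall>i<length S. E (ps'!i) (S!i)"
  proof (intro allI impI)
    fix i assume "i < length S"
    then have "Suc i < length (v#S)" by simp
    then have "E (ps!Suc i) ((v#S)!Suc i)" using st unfolding Stk_def by blast
    then show "E (ps'!i) (S!i)" using ps by simp
  qed
  have srt: "sorted_wrt kr ((p,v) # zip ps' S)" using st ps unfolding Stk_def by simp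
  then have headlt: "\<forall>x \<in> set (zip ps' S). kr (p,v) x" and srt': "sorted_wrt kr (zip ps' S)" by simp_all
  have J3: "\<And>a b. a \<in> set L \<Longrightarrow> b \<in> V \<Longrightarrow> b \<notin> set L \<Longrightarrow> P b = P a @ [b] \<Longrightarrow> (a,b) = (p,v) \<or> (a,b) \<in> set (zip ps' S)"
    using st ps unfolding Stk_def by auto
  have vV: "v \<in> V" and pV: "p \<in> V" using Epv eV by auto
  define K where "K = P p @ [v]"
  have vnP: "v \<notin> set (P p)" using closed[OF LV sep pL] nv by blast
  have Kp: "proper_path E v0 v K" unfolding proper_path_def K_def
  proof (intro conjI)
    show "is_path E (P p @ [v])" using is_path_append[of "P p" "[v]" E] P_ne[OF pV] P_path[OF pV] P_last[OF pV] Epv by simp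
    show "distinct (P p @ [v])" using P_dist[OF pV] vnP by simp
    show "hd (P p @ [v]) = v0" using P_ne[OF pV] P_hd[OF pV] by simp
    show "last (P p @ [v]) = v" by simp
  qed
  have claim: "\<And>w. w \<in> V \<Longrightarrow> w \<notin> set L \<Longrightarrow> K = P w \<or> lx K (P w)"
  proof -
    fix w assume w: "w \<in> V" "w \<notin> set L"
    obtain a b s where ab: "a \<in> set L" "b \<notin> set L" "b \<in> V" "P b = P a @ [b]" "P w = P b @ s"
      using entry[OF w v0L] by blast
    have bw: "P b = P w \<or> lx (P b) (P w)" using pre_le[OF ab(5)] .
    from J3[OF ab(1,3,2,4)] show "K = P w \<or> lx K (P w)"
    proof
      assume "(a,b) = (p,v)"
      then have "K = P b" using ab(4) unfolding K_def by simp
      then show ?thesis using bw by simp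
    next
      assume "(a,b) \<in> set (zip ps' S)"
      then have "lx K (P a @ [b])" using headlt unfolding K_def by fastforce
      then have "lx K (P b)" using ab(4) by simp
      then show ?thesis using bw lx_trans by metis
    qed
  qed
  have PvK: "P v = K"
  proof -
    have "P v = K \<or> lx (P v) K" using P_le[OF vV Kp] .
    moreover have "K = P v \<or> lx K (P v)" using claim[OF vV nv] .
    ultimately show ?thesis using lx_asym by metis
  qed
  have vmin: "\<And>w. w \<in> V \<Longrightarrow> w \<notin> set L \<Longrightarrow> w \<noteq> v \<Longrightarrow> lx (P v) (P w)"
  proof -
    fix w assume w: "w \<in> V" "w \<notin> set L" "w \<noteq> v"
    have "P v \<noteq> P w" using P_inj[OF vV w(1)] w(3) by metis
    then show "lx (P v) (P w)" using claim[OF w(1,2)] PvK by metis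
  qed
  define N where "N = sorted_nbrs E ord v (L@[v])"
  have Ns: "set N = {w. E v w \<and> w \<notin> set (L@[v])}" "sorted_wrt (ord v) N" using sn unfolding N_def by blast+
  define ps2 where "ps2 = replicate (length N) v @ ps'"
  have zipeq: "zip ps2 (N@S) = map (Pair v) N @ zip ps' S" unfolding ps2_def using zip_rep[OF lens] .
  have stk: "Stk (L@[v]) (N@S) ps2" unfolding Stk_def
  proof (intro conjI allI impI)
    show "length ps2 = length (N @ S)" unfolding ps2_def using lens by simp
    show "set ps2 \<subseteq> set (L @ [v])" unfolding ps2_def using ps'L by auto
  next
    fix i assume i: "i < length (N @ S)"
    show "E (ps2 ! i) ((N @ S) ! i)"
    proof (cases "i < length N")
      case True
      then have "ps2 ! i = v" "(N@S)!i = N!i" unfolding ps2_def by (auto simp: nth_append)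
      moreover have "N!i \<in> set N" using True by simp
      ultimately show ?thesis using Ns by auto
    next
      case False
      then have "ps2 ! i = ps'!(i - length N)" "(N@S)!i = S!(i - length N)" "i - length N < length S"
        unfolding ps2_def using i by (auto simp: nth_append)
      then show ?thesis using edS by simp
    qed
  next
    have cross: "\<forall>x\<in>set (map (Pair v) N). \<forall>y\<in>set (zip ps' S). kr x y"
    proof (intro ballI)
      fix x y assume x: "x \<in> set (map (Pair v) N)" and y: "y \<in> set (zip ps' S)"
      obtain n where xn: "x = (v, n)" using x by auto
      obtain a' b' where yab: "y = (a', b')" by (cases y)
      have a'L: "a' \<in> set L" using y yab ps'L by (auto dest: set_zip_leftD)
      have a'V: "a' \<in> V" using a'L LV by blast
      have l1: "lx (P v) (P a' @ [b'])" using headlt y yab PvK unfolding K_def by fastforce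
      have np: "\<not>(\<exists>r. r \<noteq> [] \<and> P a' @ [b'] = P v @ r)"
      proof
        assume "\<exists>r. r \<noteq> [] \<and> P a' @ [b'] = P v @ r"
        then obtain r where r: "r \<noteq> []" "P a' @ [b'] = P v @ r" by blast
        have "butlast (P a' @ [b']) = butlast (P v @ r)" using r(2) by simp
        then have e: "P a' = P v @ butlast r" using r(1) by (simp add: butlast_append)
        show False
        proof (cases "butlast r = []")
          case True
          then have "a' = v" using e P_inj[OF a'V vV] by simp
          then show False using a'L nv by simp
        next
          case False
          have "v \<in> set (P v)" using P_last[OF vV] P_ne[OF vV] last_in_set by metis
          then have "v \<in> set (P a')" using e by simp
          then have "v \<in> set L" using closed[OF LV sep a'L] by blast
          then show False using nv by simp
        qed
      qed
      have "lx (P v @ [n]) (P a' @ [b'])" using lex_snoc[OF l1 np] .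
      then show "kr x y" using xn yab by simp
    qed
    show "sorted_wrt kr (zip ps2 (N @ S))" unfolding zipeq sorted_wrt_append
      using snoc_sorted[OF vV Ns(2)] srt' cross by blast
  next
    fix a b assume h: "a \<in> set (L @ [v])" "b \<in> V" "b \<notin> set (L @ [v])" "P b = P a @ [b]"
    show "(a, b) \<in> set (zip ps2 (N @ S))"
    proof (cases "a = v")
      case True
      then have "is_path E (P v @ [b])" using h(4) P_path[OF h(2)] by simp
      then have "E (last (P v)) b" using is_path_append[of "P v" "[b]" E] P_ne[OF vV] by simp
      then have "E v b" using P_last[OF vV] by simp
      then have "b \<in> set N" using Ns h(3) by simp
      then show ?thesis unfolding zipeq using True by auto
    next
      case False
      then have "a \<in> set L" using h(1) by simp
      moreover have "b \<notin> set L" using h(3) by simp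
      ultimately have "(a,b) = (p,v) \<or> (a,b) \<in> set (zip ps' S)" using J3 h(2,4) by blast
      then show ?thesis unfolding zipeq using h(3) by auto
    qed
  qed
  have sorted2: "sorted_wrt (\<lambda>a b. lx (P a) (P b)) (L @ [v])"
    unfolding sorted_wrt_append using sL sep vV nv by auto
  have sep2: "\<forall>w\<in>set (L@[v]). \<forall>w'\<in>V - set (L@[v]). lx (P w) (P w')"
    using sep vmin by auto
  show ?thesis unfolding Inv_def N_def[symmetric] using v0L dL nv LV vV sorted2 sep2 stk by auto
qed

lemma inv_run: "dfs_run E ord L S L' \<Longrightarrow> Inv L S \<Longrightarrow> distinct L' \<and> set L' = V \<and> sorted_wrt (\<lambda>a b. lx (P a) (P b)) L'"
proof (induction rule: dfs_run.induct)
  case (stop L) then show ?case using inv_stop unfolding Inv_def by auto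
next
  case (skip v L S L') then show ?case using inv_skip by blast
next
  case (visit v L S L') then show ?case using inv_visit by blast
qed

end


lemma precedes_iff:
  assumes d: "distinct L" and s: "sorted_wrt R L" and irr: "\<And>x. \<not> R x x" and asy: "\<And>x y. R x y \<Longrightarrow> \<not> R y x"
    and u: "u \<in> set L" and v: "v \<in> set L"
  shows "precedes L u v \<longleftrightarrow> R u v"
proof
  assume "precedes L u v"
  then obtain i j where "i < j" "j < length L" "L!i = u" "L!j = v" unfolding precedes_def by blast
  then show "R u v" using s by (metis sorted_wrt_nth_less)
next
  assume r: "R u v"
  obtain i where i: "i < length L" "L!i = u" using u by (auto simp: in_set_conv_nth)
  obtain j where j: "j < length L" "L!j = v" using v by (auto simp: in_set_conv_nth)
  have "i \<noteq> j" using r irr i j by metis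
  moreover have "\<not> j < i"
  proof
    assume "j < i" then have "R v u" using s i j by (metis sorted_wrt_nth_less)
    then show False using asy r by blast
  qed
  ultimately have "i < j" by simp
  then show "precedes L u v" unfolding precedes_def using i j by blast
qed

context lg begin

abbreviation H where "H \<equiv> Theta_E V E ord v0"
abbreviation Hord where "Hord \<equiv> Theta_ord V E ord v0"

lemma H_iff: "H u v \<longleftrightarrow> u \<in> V \<and> v \<in> V \<and> v \<noteq> v0 \<and> P v = P u @ [v]"
proof
  assume h: "H u v"
  then have uv: "u \<in> V" "v \<in> V" unfolding Theta_E_def by auto
  from h obtain i where i: "Suc i < length (P v)" "P v ! i = u" "P v ! Suc i = v"
    unfolding Theta_E_def Let_def by blast
  have "P v ! (length (P v) - 1) = v" using P_last[OF uv(2)] P_ne[OF uv(2)] by (simp add: last_conv_nth)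
  moreover have "length (P v) - 1 < length (P v)" using P_ne[OF uv(2)] by simp
  ultimately have li: "Suc i = length (P v) - 1" using i P_dist[OF uv(2)] nth_eq_iff_index_eq by metis
  have Pu: "P u = take (Suc i) (P v)" using P_prefix[OF uv(2)] i by (metis Suc_lessD)
  have "P v = take (Suc (Suc i)) (P v)" using li by simp
  also have "\<dots> = take (Suc i) (P v) @ [v]" using i by (simp add: take_Suc_conv_app_nth)
  finally have e: "P v = P u @ [v]" using Pu by simp
  have "v \<noteq> v0" using i P_v0 by auto
  then show "u \<in> V \<and> v \<in> V \<and> v \<noteq> v0 \<and> P v = P u @ [v]" using uv e by simp
next
  assume h: "u \<in> V \<and> v \<in> V \<and> v \<noteq> v0 \<and> P v = P u @ [v]"
  define i where "i = length (P u) - 1"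
  have "Suc i < length (P v)" "P v ! i = u" "P v ! Suc i = v"
    using h P_ne[of u] P_last[of u] unfolding i_def
    by (auto simp: nth_append last_conv_nth)
  then show "H u v" unfolding Theta_E_def Let_def using h by blast
qed

lemma Hplus_iff: "H\<^sup>+\<^sup>+ u v \<longleftrightarrow> u \<in> V \<and> v \<in> V \<and> (\<exists>r. r \<noteq> [] \<and> P v = P u @ r)"
proof
  assume "H\<^sup>+\<^sup>+ u v"
  then show "u \<in> V \<and> v \<in> V \<and> (\<exists>r. r \<noteq> [] \<and> P v = P u @ r)"
  proof (induction rule: tranclp_induct)
    case (base y) then show ?case using H_iff by blast
  next
    case (step y z)
    then obtain r where "r \<noteq> []" "P y = P u @ r" by blast
    moreover have "z \<in> V" "P z = P y @ [z]" using step(2) H_iff by auto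
    ultimately show ?case using step by auto
  qed
next
  assume h: "u \<in> V \<and> v \<in> V \<and> (\<exists>r. r \<noteq> [] \<and> P v = P u @ r)"
  then obtain r where r: "r \<noteq> []" "P v = P u @ r" by blast
  have uV: "u \<in> V" using h by blast
  have "\<And>v. v \<in> V \<Longrightarrow> r \<noteq> [] \<Longrightarrow> P v = P u @ r \<Longrightarrow> H\<^sup>+\<^sup>+ u v"
  proof (induction r rule: rev_induct)
    case Nil then show ?case by simp
  next
    case (snoc x r)
    have xv: "x = v" using P_last[OF snoc.prems(1)] snoc.prems(3) by simp
    have vnv0: "v \<noteq> v0"
    proof
      assume "v = v0"
      then have "length (P v) = 1" using P_v0 by simp
      then show False using snoc.prems(3) P_ne[OF uV] by simp
    qed
    show ?case
    proof (cases "r = []")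
      case True
      then have "H u v" using H_iff uV snoc.prems xv vnv0 by simp
      then show ?thesis by blast
    next
      case False
      define y where "y = last (P u @ r)"
      have Py: "P y = P u @ r" using P_prefix2[OF snoc.prems(1), of "P u @ r" "[x]"] snoc.prems(3) False unfolding y_def by simp
      have yV: "y \<in> V" using P_set[OF snoc.prems(1)] snoc.prems(3) False unfolding y_def by auto
      have "H\<^sup>+\<^sup>+ u y" using snoc.IH[OF yV False Py] .
      moreover have "H y v" using H_iff yV snoc.prems xv vnv0 Py by simp
      ultimately show ?thesis by simp
    qed
  qed
  then show "H\<^sup>+\<^sup>+ u v" using h r by blast
qed

lemma TE_iff: "H\<^sup>+\<^sup>+ v0 v \<longleftrightarrow> v \<in> V \<and> v \<noteq> v0"
proof
  assume "H\<^sup>+\<^sup>+ v0 v"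
  then obtain r where "v \<in> V" "r \<noteq> []" "P v = [v0] @ r" using Hplus_iff P_v0 by auto
  then show "v \<in> V \<and> v \<noteq> v0" using P_v0 by auto
next
  assume v: "v \<in> V \<and> v \<noteq> v0"
  obtain t where t: "P v = v0 # t" using P_ne[of v] P_hd[of v] v by (cases "P v") auto
  have "t \<noteq> []" using t P_v0 P_inj[of v v0] v v0V by auto
  then show "H\<^sup>+\<^sup>+ v0 v" using Hplus_iff v v0V t P_v0 by auto
qed

lemma H_path_P: "is_path H q \<Longrightarrow> hd q = v0 \<Longrightarrow> last q \<in> V \<and> q = P (last q)"
proof (induction q rule: rev_induct)
  case Nil then show ?case by simp
next
  case (snoc x q)
  show ?case
  proof (cases "q = []")
    case True then show ?thesis using snoc.prems P_v0 v0V by simp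
  next
    case False
    have "is_path H q" "H (last q) x" using is_path_append[OF False, of "[x]" H] snoc.prems by auto
    moreover have "hd q = v0" using snoc.prems False by simp
    ultimately have q: "q = P (last q)" using snoc.IH by blast
    have "P x = P (last q) @ [x]" "x \<in> V" using \<open>H (last q) x\<close> H_iff by auto
    with q have "P x = q @ [x]" "x \<in> V" by simp_all
    then show ?thesis by simp
  qed
qed

lemma P_Hpath: "v \<in> V \<Longrightarrow> is_path H (P v)"
  unfolding is_path_def
proof (intro conjI allI impI)
  assume v: "v \<in> V"
  show "P v \<noteq> []" using P_ne[OF v] .
  fix i assume i: "Suc i < length (P v)"
  have "P v ! i \<in> set (P v)" "P v ! Suc i \<in> set (P v)" using i by simp_all
  then have a: "P v ! i \<in> V" "P v ! Suc i \<in> V" using P_set[OF v] by blast+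
  have "0 < length (P v)" using i by (cases "P v") auto
  then have "P v ! Suc i \<noteq> P v ! 0" using P_dist[OF v] i nth_eq_iff_index_eq[of "P v" "Suc i" 0] by simp
  moreover have "P v ! 0 = v0" using P_hd[OF v] P_ne[OF v] by (simp add: hd_conv_nth)
  ultimately have ne: "P v ! Suc i \<noteq> v0" by simp
  have "P (P v ! Suc i) = take (Suc (Suc i)) (P v)" using P_prefix[OF v i] .
  also have "\<dots> = take (Suc i) (P v) @ [P v ! Suc i]" using i by (simp add: take_Suc_conv_app_nth)
  also have "take (Suc i) (P v) = P (P v ! i)" using P_prefix[OF v] i by (metis Suc_lessD)
  finally show "H (P v ! i) (P v ! Suc i)" using H_iff a ne by simp
qed

lemma minH: "v \<in> V \<Longrightarrow> min_path H Hord v0 v = P v"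
proof -
  assume v: "v \<in> V"
  have pp: "proper_path H v0 v (P v)" unfolding proper_path_def using P_Hpath[OF v] P_dist[OF v] P_hd[OF v] P_last[OF v] by simp
  have uq: "\<And>q. proper_path H v0 v q \<Longrightarrow> q = P v" unfolding proper_path_def using H_path_P by metis
  have "\<exists>p. proper_path H v0 v p \<and> (\<forall>q. proper_path H v0 v q \<longrightarrow> q \<noteq> p \<longrightarrow> lex_less Hord p q)"
    using pp uq by blast
  then have "proper_path H v0 v (min_path H Hord v0 v)" unfolding min_path_def by (rule someI2_ex) blast
  then show ?thesis using uq by blast
qed

lemma Hpath_last: "is_path H (z @ a # r) \<Longrightarrow> z \<noteq> [] \<Longrightarrow> H (last z) a"
  using is_path_append[of z "a # r" H] by simp

lemma lexH: "u \<in> V \<Longrightarrow> v \<in> V \<Longrightarrow> lex_less Hord (P u) (P v) \<longleftrightarrow> lx (P u) (P v)"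
proof
  assume "lex_less Hord (P u) (P v)"
  then show "lx (P u) (P v)" unfolding lex_less_def Theta_ord_def by blast
next
  assume u: "u \<in> V" and v: "v \<in> V" and l: "lx (P u) (P v)"
  show "lex_less Hord (P u) (P v)" using l unfolding lex_less_def
  proof (elim disjE exE conjE)
    fix r assume "r \<noteq> []" "P v = P u @ r" then show "(\<exists>r. r \<noteq> [] \<and> P v = P u @ r) \<or>
    (\<exists>z v1 v2 r1 r2. P u = z @ v1 # r1 \<and> P v = z @ v2 # r2 \<and> z \<noteq> [] \<and> v1 \<noteq> v2 \<and> Hord (last z) v1 v2)" by blast
  next
    fix z v1 v2 r1 r2 assume h: "P u = z @ v1 # r1" "P v = z @ v2 # r2" "z \<noteq> []" "v1 \<noteq> v2" "ord (last z) v1 v2"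
    have "H (last z) v1" using Hpath_last[of z v1 r1] P_Hpath[OF u] h by simp
    moreover have "H (last z) v2" using Hpath_last[of z v2 r2] P_Hpath[OF v] h by simp
    ultimately have "Hord (last z) v1 v2" unfolding Theta_ord_def using h by simp
    then show "(\<exists>r. r \<noteq> [] \<and> P v = P u @ r) \<or>
    (\<exists>z v1 v2 r1 r2. P u = z @ v1 # r1 \<and> P v = z @ v2 # r2 \<and> z \<noteq> [] \<and> v1 \<noteq> v2 \<and> Hord (last z) v1 v2)" using h by blast
  qed
qed

end

theorem lemma9p1:
  fixes V :: "'a set" and E :: "'a \<Rightarrow> 'a \<Rightarrow> bool" and ord :: "'a \<Rightarrow> 'a \<Rightarrow> 'a \<Rightarrow> bool" and v0 :: 'a
  assumes "edge_ordered V E ord"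
    and "connected_from V E v0"
  defines "TE \<equiv> F_E (Theta_E V E ord v0)"
    and "Tord \<equiv> F_ord (Theta_E V E ord v0) (Theta_ord V E ord v0)"
    and "L \<equiv> dfs_traversal E ord v0"
  shows "dfs_run E ord [] [v0] L \<and> distinct L \<and> set L = V \<and> hd L = v0
     \<and> {v. TE v0 v} = V - {v0}
     \<and> (\<forall>u v. TE v0 u \<longrightarrow> TE v0 v \<longrightarrow>
            (Tord v0 u v \<longleftrightarrow> precedes L u v))"
proof -
  interpret lg V E ord v0 using assms(1,2) by unfold_locales
  obtain L' where run: "dfs_run E ord [] [v0] L'" using dfs_exists[of "[]" "[v0]"] v0V by auto
  have LL: "L = L'" unfolding L_def dfs_traversal_def
    using run dfs_det by (metis the_equality)
  from run have run2: "dfs_run E ord [v0] (sorted_nbrs E ord v0 [v0]) L'"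
    by (cases rule: dfs_run.cases) auto
  have props: "distinct L' \<and> set L' = V \<and> sorted_wrt (\<lambda>a b. lx (P a) (P b)) L'"
    using inv_run[OF run2 inv_init] .
  obtain r where "L' = [v0] @ r" using dfs_prefix[OF run2] by blast
  then have hd: "hd L' = v0" by simp
  have TE: "\<And>v. TE v0 v \<longleftrightarrow> v \<in> V \<and> v \<noteq> v0" unfolding TE_def F_E_def using TE_iff by blast
  have ord: "\<forall>u v. TE v0 u \<longrightarrow> TE v0 v \<longrightarrow> (Tord v0 u v \<longleftrightarrow> precedes L u v)"
  proof (intro allI impI)
    fix u v assume u: "TE v0 u" and v: "TE v0 v"
    then have uV: "u \<in> V" and vV: "v \<in> V" using TE by auto
    have uv: "H\<^sup>+\<^sup>+ v0 u" "H\<^sup>+\<^sup>+ v0 v" using u v unfolding TE_def F_E_def by auto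
    have "Tord v0 u v \<longleftrightarrow> lx (P u) (P v)"
      unfolding Tord_def F_ord_def using uv minH[OF uV] minH[OF vV] lexH[OF uV vV] by simp
    also have "\<dots> \<longleftrightarrow> precedes L u v"
    proof -
      have d: "distinct L'" and so: "sorted_wrt (\<lambda>a b. lx (P a) (P b)) L'" and sV: "set L' = V" using props by auto
      have uL: "u \<in> set L'" and vL: "v \<in> set L'" using sV uV vV by auto
      have "precedes L' u v \<longleftrightarrow> lx (P u) (P v)"
        by (rule precedes_iff[OF d so _ _ uL vL]) (auto simp: lex_irrefl dest: lx_asym)
      then show ?thesis using LL by simp
    qed
    finally show "Tord v0 u v \<longleftrightarrow> precedes L u v" .
  qed
  have TEs: "{v. TE v0 v} = V - {v0}" using TE by auto
  show ?thesis using run props hd TEs ord unfolding LL by blast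
qed


end
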